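(* Let $G$ be a connected graph with a pair $\{v_i,v_j\}$ of order $h$ and associated vector $S=(s_1,\dots,s_n)^t$. Let $G'$ be a subgraph of $G$ all of whose vertices have the same weight, and let $\tilde G$ be the graph obtained from $G$ by removing all edges of $G'$. If $\tilde G$ is not connected, then $v_i$ and $v_j$ belong to the same connected component of $\tilde G$.
   Context: Graphs are finite, may have multiple edges, no loops. For $G$ with vertices $v_1,\dots,v_n$ let $c_{ij}$ ($i\neq j$) be the number of edges joining $v_i,v_j$, $c_{ii}=-\sum_{j\ne i}c_{ij}$, $M(G)=(c_{ij})$. For an integer $h>0$, a pair $\{v_i,v_j\}$ has order $h$ if there is $S=(s_1,\dots,s_n)^t\in\mathbb{Z}^n$ with $M(G)S=h(e_i-e_j)$ and $\gcd(s_1-s_n,\dots,s_{n-1}-s_n)=1$; the weight of $v_k$ is $s_k$. *)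

theory Defs
  imports Main
begin

text \<open>A multigraph on the vertices v_0,...,v_(n-1) (indices 0..<n) is given by
  edge multiplicities c k l (number of edges joining v_k and v_l).\<close>

definition multigraph :: "nat \<Rightarrow> (nat \<Rightarrow> nat \<Rightarrow> nat) \<Rightarrow> bool" where
  "multigraph n c \<longleftrightarrow> (\<forall>k<n. \<forall>l<n. c k l = c l k) \<and> (\<forall>k<n. c k k = 0)"

definition adj :: "nat \<Rightarrow> (nat \<Rightarrow> nat \<Rightarrow> nat) \<Rightarrow> (nat \<times> nat) set" where
  "adj n c = {(k, l). k < n \<and> l < n \<and> c k l > 0}"

definition connected_mg :: "nat \<Rightarrow> (nat \<Rightarrow> nat \<Rightarrow> nat) \<Rightarrow> bool" where
  "connected_mg n c \<longleftrightarrow> (\<forall>k<n. \<forall>l<n. (k, l) \<in> (adj n c)\<^sup>*)"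

definition same_component :: "nat \<Rightarrow> (nat \<Rightarrow> nat \<Rightarrow> nat) \<Rightarrow> nat \<Rightarrow> nat \<Rightarrow> bool" where
  "same_component n c k l \<longleftrightarrow> k < n \<and> l < n \<and> (k, l) \<in> (adj n c)\<^sup>*"

definition Mmat :: "nat \<Rightarrow> (nat \<Rightarrow> nat \<Rightarrow> nat) \<Rightarrow> nat \<Rightarrow> nat \<Rightarrow> int" where
  "Mmat n c k l = (if k = l then - (\<Sum>m\<in>{0..<n} - {k}. int (c k m)) else int (c k l))"

definition unit_vec :: "nat \<Rightarrow> nat \<Rightarrow> int" where
  "unit_vec i k = (if k = i then 1 else 0)"

definition pair_of_order ::
  "nat \<Rightarrow> (nat \<Rightarrow> nat \<Rightarrow> nat) \<Rightarrow> nat \<Rightarrow> nat \<Rightarrow> int \<Rightarrow> (nat \<Rightarrow> int) \<Rightarrow> bool" where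
  "pair_of_order n c i j h s \<longleftrightarrow>
     i < n \<and> j < n \<and> i \<noteq> j \<and> h > 0 \<and>
     (\<forall>k<n. (\<Sum>l<n. Mmat n c k l * s l) = h * (unit_vec i k - unit_vec j k)) \<and>
     Gcd ((\<lambda>k. s k - s (n - 1)) ` {0..<n - 1}) = 1"

definition subgraph_mg ::
  "nat \<Rightarrow> (nat \<Rightarrow> nat \<Rightarrow> nat) \<Rightarrow> nat set \<Rightarrow> (nat \<Rightarrow> nat \<Rightarrow> nat) \<Rightarrow> bool" where
  "subgraph_mg n c V' c' \<longleftrightarrow> V' \<subseteq> {0..<n} \<and> multigraph n c' \<and>
     (\<forall>k<n. \<forall>l<n. c' k l \<le> c k l) \<and>
     (\<forall>k<n. \<forall>l<n. c' k l > 0 \<longrightarrow> k \<in> V' \<and> l \<in> V')"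

definition remove_edges :: "(nat \<Rightarrow> nat \<Rightarrow> nat) \<Rightarrow> (nat \<Rightarrow> nat \<Rightarrow> nat) \<Rightarrow> nat \<Rightarrow> nat \<Rightarrow> nat" where
  "remove_edges c c' k l = c k l - c' k l"

end

theory Submission
  imports Defs
begin

lemma row_eq:
  assumes "multigraph n c" "k < n"
  shows "(\<Sum>l<n. Mmat n c k l * s l) = (\<Sum>l<n. int (c k l) * (s l - s k))"
proof -
  have ckk: "c k k = 0" using assms unfolding multigraph_def by auto
  have A: "{..<n} = insert k ({0..<n} - {k})" using assms by auto
  have "(\<Sum>l<n. Mmat n c k l * s l) = Mmat n c k k * s k + (\<Sum>l\<in>{0..<n} - {k}. Mmat n c k l * s l)"
    by (subst A, subst sum.insert) auto
  also have "(\<Sum>l\<in>{0..<n} - {k}. Mmat n c k l * s l) = (\<Sum>l\<in>{0..<n} - {k}. int (c k l) * s l)"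
    by (rule sum.cong) (auto simp: Mmat_def)
  also have "Mmat n c k k * s k = - (\<Sum>l\<in>{0..<n} - {k}. int (c k l) * s k)"
    by (simp add: Mmat_def sum_distrib_right)
  finally have 1: "(\<Sum>l<n. Mmat n c k l * s l) = (\<Sum>l\<in>{0..<n} - {k}. int (c k l) * (s l - s k))"
    by (simp add: sum_subtractf right_diff_distrib)
  have "(\<Sum>l<n. int (c k l) * (s l - s k)) = int (c k k) * (s k - s k) + (\<Sum>l\<in>{0..<n} - {k}. int (c k l) * (s l - s k))"
    by (subst A, subst sum.insert) auto
  with 1 ckk show ?thesis by simp
qed

lemma inner_zero:
  assumes "multigraph n c" "C \<subseteq> {..<n}" "finite C"
  shows "(\<Sum>k\<in>C. \<Sum>l\<in>C. int (c k l) * (s l - s k)) = 0"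
proof -
  let ?F = "(\<Sum>k\<in>C. \<Sum>l\<in>C. int (c k l) * (s l - s k))"
  have "?F = (\<Sum>l\<in>C. \<Sum>k\<in>C. int (c k l) * (s l - s k))" by (rule sum.swap)
  also have "\<dots> = (\<Sum>l\<in>C. \<Sum>k\<in>C. - (int (c l k) * (s k - s l)))"
  proof (intro sum.cong refl)
    fix l k assume "l \<in> C" "k \<in> C"
    then have "c k l = c l k" using assms unfolding multigraph_def by auto
    then show "int (c k l) * (s l - s k) = - (int (c l k) * (s k - s l))" by (simp add: algebra_simps)
  qed
  also have "\<dots> = - ?F" by (simp add: sum_negf)
  finally show ?thesis by simp
qed

theorem lemma1p10:
  fixes n :: nat and c c' :: "nat \<Rightarrow> nat \<Rightarrow> nat" and V' :: "nat set"
    and i j :: nat and h :: int and s :: "nat \<Rightarrow> int"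
  assumes "multigraph n c"
    and "connected_mg n c"
    and "pair_of_order n c i j h s"
    and "subgraph_mg n c V' c'"
    and "\<forall>k\<in>V'. \<forall>l\<in>V'. s k = s l"
    and "\<not> connected_mg n (remove_edges c c')"
  shows "same_component n (remove_edges c c') i j"
proof (rule ccontr)
  assume nc: "\<not> same_component n (remove_edges c c') i j"
  have P: "i < n" "j < n" "i \<noteq> j" "h > 0"
    "\<And>k. k<n \<Longrightarrow> (\<Sum>l<n. Mmat n c k l * s l) = h * (unit_vec i k - unit_vec j k)"
    using assms(3) unfolding pair_of_order_def by blast+
  define C where "C = {k. k < n \<and> (i, k) \<in> (adj n (remove_edges c c'))\<^sup>*}"
  have Cn: "C \<subseteq> {..<n}" unfolding C_def by blast
  have fC: "finite C" using Cn finite_subset by blast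
  have iC: "i \<in> C" using P unfolding C_def by auto
  have jC: "j \<notin> C" using nc P unfolding C_def same_component_def by auto
  have cross: "int (c k l) * (s l - s k) = 0" if "k \<in> C" "l < n" "l \<notin> C" for k l
  proof (cases "c k l = 0")
    case False
    have kn: "k < n" using that Cn by auto
    have "c k l - c' k l = 0"
    proof (rule ccontr)
      assume "c k l - c' k l \<noteq> 0"
      then have "(k, l) \<in> adj n (remove_edges c c')"
        using kn that(2) unfolding adj_def remove_edges_def by simp
      moreover have "(i, k) \<in> (adj n (remove_edges c c'))\<^sup>*" using that(1) unfolding C_def by blast
      ultimately have "(i, l) \<in> (adj n (remove_edges c c'))\<^sup>*" by (rule rtrancl_into_rtrancl[rotated])
      then have "l \<in> C" using that(2) unfolding C_def by blast
      with that show False by simp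
    qed
    then have "c' k l > 0" using False by simp
    then have "k \<in> V' \<and> l \<in> V'" using assms(4) kn that(2) unfolding subgraph_mg_def by blast
    then have "s k = s l" using assms(5) by blast
    then show ?thesis by simp
  qed simp
  have "(\<Sum>k\<in>C. \<Sum>l<n. int (c k l) * (s l - s k))
      = (\<Sum>k\<in>C. (\<Sum>l\<in>C. int (c k l) * (s l - s k)) + (\<Sum>l\<in>{..<n} - C. int (c k l) * (s l - s k)))"
  proof (rule sum.cong[OF refl])
    fix k assume "k \<in> C"
    show "(\<Sum>l<n. int (c k l) * (s l - s k)) = (\<Sum>l\<in>C. int (c k l) * (s l - s k)) + (\<Sum>l\<in>{..<n} - C. int (c k l) * (s l - s k))"
      using sum.subset_diff[OF Cn, of "\<lambda>l. int (c k l) * (s l - s k)"] by simp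
  qed
  also have "\<dots> = (\<Sum>k\<in>C. \<Sum>l\<in>C. int (c k l) * (s l - s k))"
  proof (rule sum.cong[OF refl])
    fix k assume kC: "k \<in> C"
    have "(\<Sum>l\<in>{..<n} - C. int (c k l) * (s l - s k)) = 0"
      by (rule sum.neutral) (use cross kC in blast)
    then show "(\<Sum>l\<in>C. int (c k l) * (s l - s k)) + (\<Sum>l\<in>{..<n} - C. int (c k l) * (s l - s k)) = (\<Sum>l\<in>C. int (c k l) * (s l - s k))" by simp
  qed
  also have "\<dots> = 0" by (rule inner_zero[OF assms(1) Cn fC])
  finally have Z: "(\<Sum>k\<in>C. \<Sum>l<n. int (c k l) * (s l - s k)) = 0" .
  have "(\<Sum>k\<in>C. \<Sum>l<n. int (c k l) * (s l - s k)) = (\<Sum>k\<in>C. h * (unit_vec i k - unit_vec j k))"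
  proof (rule sum.cong[OF refl])
    fix k assume "k \<in> C"
    then have kn: "k < n" using Cn by blast
    show "(\<Sum>l<n. int (c k l) * (s l - s k)) = h * (unit_vec i k - unit_vec j k)"
      using row_eq[OF assms(1) kn, of s] P(5)[OF kn] by simp
  qed
  also have "\<dots> = h * (\<Sum>k\<in>C. unit_vec i k) - h * (\<Sum>k\<in>C. unit_vec j k)"
    by (simp add: sum_distrib_left sum_subtractf right_diff_distrib)
  also have "(\<Sum>k\<in>C. unit_vec i k) = 1" using iC fC by (simp add: unit_vec_def)
  also have "(\<Sum>k\<in>C. unit_vec j k) = 0" using jC unfolding unit_vec_def by (intro sum.neutral) auto
  finally show False using Z P(4) by simp
qed

end
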